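(* Let $P$ be a finite poset and $R$ a consistent restriction function on $P$. Then the poset $\Gamma(P,R)$ is isomorphic to the dual of the poset of meet-irreducible elements of the lattice $\mathrm{Inc}^R(P)$ (with the order induced from $\mathrm{Inc}^R(P)$). Consequently, the order ideals of $\Gamma(P,R)$ are in bijection with $\mathrm{Inc}^R(P)$.
   Context: A restriction function on a finite poset $P$ assigns to each $p\in P$ a nonempty finite set $R(p)\subseteq\mathbb{Z}$. $\mathrm{Inc}^R(P)$ is the set of increasing labelings: functions $f:P\to\mathbb{Z}$ with $f(p)\in R(p)$ for all $p$ and $p_1<p_2\Rightarrow f(p_1)<f(p_2)$. It is partially ordered by $f\le g$ iff $f(p)\le g(p)$ for all $p$; this is a finite distributive lattice (meet and join are pointwise min and max). An element $x$ of a lattice is meet-irreducible if it is not the top element and $x=y\wedge z$ implies $x=y$ or $x=z$. $R$ is consistent if for every cover relation $x\lessdot y$ in $P$, $\min R(x)<\min R(y)$ and $\max R(x)<\max R(y)$. Write $R(p)^*=R(p)\setminus\{\max R(p)\}$, $R(p)_{>k}$ for the smallest element of $R(p)$ greater than $k$, and $R(p)_{<k}$ for the largest element of $R(p)$ less than $k$. $\Gamma(P,R)$ is the poset on the set $\{(p,k): p\in P,\ k\in R(p)^*\}$ whose order is the reflexive–transitive closure of the relation $(p_1,k_1)\lessdot(p_2,k_2)$ (the covering relations of $\Gamma(P,R)$), which holds iff either (1) $p_1=p_2$ and $R(p_1)_{>k_2}=k_1$; or (2) $p_1\lessdot p_2$ in $P$, $k_1=R(p_1)_{<k_2}$ (and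 $k_1\ne\max R(p_1)$), and there is no $k\in R(p_2)$ with $k>k_2$ and $R(p_1)_{<k}=k_1$. An order ideal of a poset is a downward-closed subset. *)

theory Defs
  imports "HOL-Library.FuncSet"
begin

definition poset_on :: "'a set \<Rightarrow> ('a \<Rightarrow> 'a \<Rightarrow> bool) \<Rightarrow> bool" where
  "poset_on P le \<longleftrightarrow>
     (\<forall>x\<in>P. le x x) \<and>
     (\<forall>x\<in>P. \<forall>y\<in>P. le x y \<and> le y x \<longrightarrow> x = y) \<and>
     (\<forall>x\<in>P. \<forall>y\<in>P. \<forall>z\<in>P. le x y \<and> le y z \<longrightarrow> le x z)"

definition covers :: "'a set \<Rightarrow> ('a \<Rightarrow> 'a \<Rightarrow> bool) \<Rightarrow> 'a \<Rightarrow> 'a \<Rightarrow> bool" where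
  "covers P le x y \<longleftrightarrow> x \<in> P \<and> y \<in> P \<and> le x y \<and> x \<noteq> y \<and>
     \<not> (\<exists>z\<in>P. le x z \<and> x \<noteq> z \<and> le z y \<and> z \<noteq> y)"

definition restriction_fun :: "'a set \<Rightarrow> ('a \<Rightarrow> int set) \<Rightarrow> bool" where
  "restriction_fun P R \<longleftrightarrow> (\<forall>p\<in>P. finite (R p) \<and> R p \<noteq> {})"

definition consistent :: "'a set \<Rightarrow> ('a \<Rightarrow> 'a \<Rightarrow> bool) \<Rightarrow> ('a \<Rightarrow> int set) \<Rightarrow> bool" where
  "consistent P le R \<longleftrightarrow>
     (\<forall>x y. covers P le x y \<longrightarrow> Min (R x) < Min (R y) \<and> Max (R x) < Max (R y))"

definition Inc :: "'a set \<Rightarrow> ('a \<Rightarrow> 'a \<Rightarrow> bool) \<Rightarrow> ('a \<Rightarrow> int set) \<Rightarrow> ('a \<Rightarrow> int) set" where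
  "Inc P le R = {f \<in> Pi\<^sub>E P R. \<forall>p1\<in>P. \<forall>p2\<in>P. le p1 p2 \<and> p1 \<noteq> p2 \<longrightarrow> f p1 < f p2}"

definition inc_le :: "'a set \<Rightarrow> ('a \<Rightarrow> int) \<Rightarrow> ('a \<Rightarrow> int) \<Rightarrow> bool" where
  "inc_le P f g \<longleftrightarrow> (\<forall>p\<in>P. f p \<le> g p)"

definition is_meet :: "'b set \<Rightarrow> ('b \<Rightarrow> 'b \<Rightarrow> bool) \<Rightarrow> 'b \<Rightarrow> 'b \<Rightarrow> 'b \<Rightarrow> bool" where
  "is_meet L le x y z \<longleftrightarrow> x \<in> L \<and> le x y \<and> le x z \<and>
     (\<forall>w\<in>L. le w y \<and> le w z \<longrightarrow> le w x)"

definition meet_irreducible :: "'b set \<Rightarrow> ('b \<Rightarrow> 'b \<Rightarrow> bool) \<Rightarrow> 'b \<Rightarrow> bool" where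
  "meet_irreducible L le x \<longleftrightarrow> x \<in> L \<and> (\<exists>y\<in>L. \<not> le y x) \<and>
     (\<forall>y\<in>L. \<forall>z\<in>L. is_meet L le x y z \<longrightarrow> x = y \<or> x = z)"

definition succ_in :: "int set \<Rightarrow> int \<Rightarrow> int" where
  "succ_in S k = Min {x \<in> S. k < x}"

definition pred_in :: "int set \<Rightarrow> int \<Rightarrow> int" where
  "pred_in S k = Max {x \<in> S. x < k}"

definition Gamma_set :: "'a set \<Rightarrow> ('a \<Rightarrow> int set) \<Rightarrow> ('a \<times> int) set" where
  "Gamma_set P R = {(p, k). p \<in> P \<and> k \<in> R p \<and> k \<noteq> Max (R p)}"

definition Gamma_cover :: "'a set \<Rightarrow> ('a \<Rightarrow> 'a \<Rightarrow> bool) \<Rightarrow> ('a \<Rightarrow> int set)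
    \<Rightarrow> 'a \<times> int \<Rightarrow> 'a \<times> int \<Rightarrow> bool" where
  "Gamma_cover P le R a b \<longleftrightarrow>
     a \<in> Gamma_set P R \<and> b \<in> Gamma_set P R \<and>
     (let (p1, k1) = a; (p2, k2) = b in
       (p1 = p2 \<and> succ_in (R p1) k2 = k1) \<or>
       (covers P le p1 p2 \<and> {x \<in> R p1. x < k2} \<noteq> {} \<and> k1 = pred_in (R p1) k2 \<and>
        k1 \<noteq> Max (R p1) \<and>
        \<not> (\<exists>k\<in>R p2. k > k2 \<and> pred_in (R p1) k = k1)))"

definition Gamma_le :: "'a set \<Rightarrow> ('a \<Rightarrow> 'a \<Rightarrow> bool) \<Rightarrow> ('a \<Rightarrow> int set)
    \<Rightarrow> 'a \<times> int \<Rightarrow> 'a \<times> int \<Rightarrow> bool" where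
  "Gamma_le P le R a b \<longleftrightarrow> a \<in> Gamma_set P R \<and> b \<in> Gamma_set P R \<and>
     (Gamma_cover P le R)\<^sup>*\<^sup>* a b"

definition order_ideals :: "'b set \<Rightarrow> ('b \<Rightarrow> 'b \<Rightarrow> bool) \<Rightarrow> 'b set set" where
  "order_ideals X le = {I. I \<subseteq> X \<and> (\<forall>a\<in>I. \<forall>b\<in>X. le b a \<longrightarrow> b \<in> I)}"

end

theory Submission
  imports Defs
begin

definition gfun :: "'a set \<Rightarrow> ('a \<Rightarrow> int set) \<Rightarrow> ('a \<times> int) set \<Rightarrow> 'a \<Rightarrow> int" where
  "gfun P R D = (\<lambda>q. if q \<in> P then Min (insert (Max (R q)) {k \<in> R q. (q,k) \<in> D}) else undefined)"

definition Wf :: "'a set \<Rightarrow> ('a \<Rightarrow> 'a \<Rightarrow> bool) \<Rightarrow> ('a \<Rightarrow> int set) \<Rightarrow> 'a \<Rightarrow> int \<Rightarrow> 'a \<Rightarrow> int" where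
  "Wf P le R p k = (\<lambda>q. if q \<in> P then (if le q p \<and> q \<noteq> p then Min (R q) else if q = p then k else Max (R q)) else undefined)"

definition minf :: "'a set \<Rightarrow> ('a \<Rightarrow> int) set \<Rightarrow> 'a \<Rightarrow> int" where
  "minf P A = (\<lambda>q. if q \<in> P then Min ((\<lambda>a. a q) ` A) else undefined)"

locale gsetting =
  fixes P :: "'a set" and le :: "'a \<Rightarrow> 'a \<Rightarrow> bool" and R :: "'a \<Rightarrow> int set"
  assumes finP: "finite P" and pos: "poset_on P le" and rf: "restriction_fun P R"
    and cons: "consistent P le R"
begin

lemma finR: "p \<in> P \<Longrightarrow> finite (R p)" using rf by (simp add: restriction_fun_def)
lemma neR: "p \<in> P \<Longrightarrow> R p \<noteq> {}" using rf by (simp add: restriction_fun_def)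
lemma le_refl: "x \<in> P \<Longrightarrow> le x x" using pos unfolding poset_on_def by blast
lemma le_antisym: "x \<in> P \<Longrightarrow> y \<in> P \<Longrightarrow> le x y \<Longrightarrow> le y x \<Longrightarrow> x = y"
  using pos unfolding poset_on_def by blast
lemma le_trans: assumes "x \<in> P" "y \<in> P" "z \<in> P" "le x y" "le y z" shows "le x z"
proof -
  have H: "\<forall>x\<in>P. \<forall>y\<in>P. \<forall>z\<in>P. le x y \<and> le y z \<longrightarrow> le x z" using pos unfolding poset_on_def by blast
  show ?thesis using H assms by blast
qed

lemma MaxR: "p \<in> P \<Longrightarrow> Max (R p) \<in> R p" using finR neR by simp
lemma MinR: "p \<in> P \<Longrightarrow> Min (R p) \<in> R p" using finR neR by simp
lemma le_MaxR: "p \<in> P \<Longrightarrow> k \<in> R p \<Longrightarrow> k \<le> Max (R p)" using finR by simp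
lemma ge_MinR: "p \<in> P \<Longrightarrow> k \<in> R p \<Longrightarrow> Min (R p) \<le> k" using finR by simp

lemma chain_lt:
  assumes hc: "\<And>x y. covers P le x y \<Longrightarrow> h x < (h y :: int)"
  shows "x \<in> P \<Longrightarrow> y \<in> P \<Longrightarrow> le x y \<Longrightarrow> x \<noteq> y \<Longrightarrow> h x < h y"
proof (induction "card {z\<in>P. le x z \<and> le z y}" arbitrary: x y rule: less_induct)
  case less
  show ?case
  proof (cases "covers P le x y")
    case True thus ?thesis by (rule hc)
  next
    case False
    then obtain z where z: "z\<in>P" "le x z" "x\<noteq>z" "le z y" "z\<noteq>y"
      using less.prems unfolding covers_def by blast
    have s1: "{w\<in>P. le x w \<and> le w z} \<subset> {w\<in>P. le x w \<and> le w y}"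
    proof
      show "{w\<in>P. le x w \<and> le w z} \<subseteq> {w\<in>P. le x w \<and> le w y}"
      proof
        fix w assume "w \<in> {w\<in>P. le x w \<and> le w z}"
        then have w: "w \<in> P" "le x w" "le w z" by auto
        have "le w y" using le_trans[OF w(1) z(1) less.prems(2) w(3) z(4)] .
        then show "w \<in> {w\<in>P. le x w \<and> le w y}" using w by simp
      qed
      have "\<not> le y z" using le_antisym[OF z(1) less.prems(2) z(4)] z(5) by blast
      then have "y \<notin> {w\<in>P. le x w \<and> le w z}" by simp
      moreover have "y \<in> {w\<in>P. le x w \<and> le w y}" using less.prems le_refl by simp
      ultimately show "{w\<in>P. le x w \<and> le w z} \<noteq> {w\<in>P. le x w \<and> le w y}" by blast
    qed
    have s2: "{w\<in>P. le z w \<and> le w y} \<subset> {w\<in>P. le x w \<and> le w y}"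
    proof
      show "{w\<in>P. le z w \<and> le w y} \<subseteq> {w\<in>P. le x w \<and> le w y}"
      proof
        fix w assume "w \<in> {w\<in>P. le z w \<and> le w y}"
        then have w: "w \<in> P" "le z w" "le w y" by auto
        have "le x w" using le_trans[OF less.prems(1) z(1) w(1) z(2) w(2)] .
        then show "w \<in> {w\<in>P. le x w \<and> le w y}" using w by simp
      qed
      have "\<not> le z x" using le_antisym[OF less.prems(1) z(1) z(2)] z(3) by blast
      then have "x \<notin> {w\<in>P. le z w \<and> le w y}" by simp
      moreover have "x \<in> {w\<in>P. le x w \<and> le w y}" using less.prems le_refl by simp
      ultimately show "{w\<in>P. le z w \<and> le w y} \<noteq> {w\<in>P. le x w \<and> le w y}" by blast
    qed
    have f: "finite {w\<in>P. le x w \<and> le w y}" using finP by simp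
    have "h x < h z"
      by (rule less.hyps[OF psubset_card_mono[OF f s1]]) (use z less.prems in auto)
    moreover have "h z < h y"
      by (rule less.hyps[OF psubset_card_mono[OF f s2]]) (use z less.prems in auto)
    ultimately show ?thesis by simp
  qed
qed

lemma Min_lt: "x \<in> P \<Longrightarrow> y \<in> P \<Longrightarrow> le x y \<Longrightarrow> x \<noteq> y \<Longrightarrow> Min (R x) < Min (R y)"
  by (rule chain_lt[where h="\<lambda>p. Min (R p)"]) (use cons in \<open>auto simp: consistent_def\<close>)
lemma Max_lt: "x \<in> P \<Longrightarrow> y \<in> P \<Longrightarrow> le x y \<Longrightarrow> x \<noteq> y \<Longrightarrow> Max (R x) < Max (R y)"
  by (rule chain_lt[where h="\<lambda>p. Max (R p)"]) (use cons in \<open>auto simp: consistent_def\<close>)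

lemma IncD1: "f \<in> Inc P le R \<Longrightarrow> q \<in> P \<Longrightarrow> f q \<in> R q" by (auto simp: Inc_def)
lemma IncD2: "f \<in> Inc P le R \<Longrightarrow> x \<in> P \<Longrightarrow> y \<in> P \<Longrightarrow> le x y \<Longrightarrow> x \<noteq> y \<Longrightarrow> f x < f y"
  by (auto simp: Inc_def)
lemma IncD3: "f \<in> Inc P le R \<Longrightarrow> q \<notin> P \<Longrightarrow> f q = undefined" by (auto simp: Inc_def)
lemma IncI:
  assumes "\<And>q. q \<in> P \<Longrightarrow> f q \<in> R q" "\<And>q. q \<notin> P \<Longrightarrow> f q = undefined"
    "\<And>x y. covers P le x y \<Longrightarrow> f x < f y"
  shows "f \<in> Inc P le R"
proof -
  have "f \<in> Pi\<^sub>E P R" using assms(1,2) by (auto simp: PiE_def extensional_def Pi_def)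
  moreover have "\<forall>p1\<in>P. \<forall>p2\<in>P. le p1 p2 \<and> p1 \<noteq> p2 \<longrightarrow> f p1 < f p2"
    using chain_lt[of f, OF assms(3)] by blast
  ultimately show ?thesis unfolding Inc_def by blast
qed

lemma inc_eq: "f \<in> Inc P le R \<Longrightarrow> g \<in> Inc P le R \<Longrightarrow> inc_le P f g \<Longrightarrow> inc_le P g f \<Longrightarrow> f = g"
proof (rule ext)
  fix q assume a: "f \<in> Inc P le R" "g \<in> Inc P le R" "inc_le P f g" "inc_le P g f"
  show "f q = g q"
  proof (cases "q \<in> P")
    case True then show ?thesis using a(3,4) unfolding inc_le_def by (meson antisym)
  next
    case False then show ?thesis using IncD3[OF a(1) False] IncD3[OF a(2) False] by simp
  qed
qed

lemma cover_iff: "Gamma_cover P le R (p1,k1) (p2,k2) \<longleftrightarrow>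
   (p1,k1) \<in> Gamma_set P R \<and> (p2,k2) \<in> Gamma_set P R \<and>
   ((p1 = p2 \<and> succ_in (R p1) k2 = k1) \<or>
       (covers P le p1 p2 \<and> {x \<in> R p1. x < k2} \<noteq> {} \<and> k1 = pred_in (R p1) k2 \<and>
        k1 \<noteq> Max (R p1) \<and>
        \<not> (\<exists>k\<in>R p2. k > k2 \<and> pred_in (R p1) k = k1)))"
  by (simp add: Gamma_cover_def)

lemma G_iff: "(p,k) \<in> Gamma_set P R \<longleftrightarrow> p \<in> P \<and> k \<in> R p \<and> k \<noteq> Max (R p)"
  by (simp add: Gamma_set_def)

lemma G_lt: "(p,k) \<in> Gamma_set P R \<Longrightarrow> k < Max (R p)"
  using G_iff le_MaxR by fastforce

lemma succ_props: assumes "(p,k) \<in> Gamma_set P R"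
  shows "succ_in (R p) k \<in> R p" "k < succ_in (R p) k"
    "\<And>x. x \<in> R p \<Longrightarrow> k < x \<Longrightarrow> succ_in (R p) k \<le> x"
proof -
  have ne: "{x \<in> R p. k < x} \<noteq> {}" using assms G_lt MaxR G_iff by blast
  have fin: "finite {x \<in> R p. k < x}" using assms G_iff finR by auto
  show "succ_in (R p) k \<in> R p" "k < succ_in (R p) k"
    using Min_in[OF fin ne] by (auto simp: succ_in_def)
  show "\<And>x. x \<in> R p \<Longrightarrow> k < x \<Longrightarrow> succ_in (R p) k \<le> x"
    using fin by (auto simp: succ_in_def)
qed

lemma pred_props: assumes "p \<in> P" "{x \<in> R p. x < k} \<noteq> {}"
  shows "pred_in (R p) k \<in> R p" "pred_in (R p) k < k"
    "\<And>x. x \<in> R p \<Longrightarrow> x < k \<Longrightarrow> x \<le> pred_in (R p) k"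
proof -
  have fin: "finite {x \<in> R p. x < k}" using assms finR by auto
  show "pred_in (R p) k \<in> R p" "pred_in (R p) k < k"
    using Max_in[OF fin assms(2)] by (auto simp: pred_in_def)
  show "\<And>x. x \<in> R p \<Longrightarrow> x < k \<Longrightarrow> x \<le> pred_in (R p) k"
    using fin by (auto simp: pred_in_def)
qed

lemma sound:
  "(Gamma_cover P le R)\<^sup>*\<^sup>* a b \<Longrightarrow> f \<in> Inc P le R \<Longrightarrow> f (fst b) \<le> snd b \<Longrightarrow> f (fst a) \<le> snd a"
proof (induction rule: converse_rtranclp_induct)
  case base
  then show ?case by simp
next
  case (step a y)
  obtain p1 k1 where a: "a = (p1,k1)" by (cases a)
  obtain p2 k2 where y: "y = (p2,k2)" by (cases y)
  have IH: "f p2 \<le> k2" using step y by simp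
  from step.hyps(1) consider "(p1,k1) \<in> Gamma_set P R" "(p2,k2) \<in> Gamma_set P R" "p1 = p2" "succ_in (R p1) k2 = k1"
    | "(p1,k1) \<in> Gamma_set P R" "(p2,k2) \<in> Gamma_set P R" "covers P le p1 p2" "{x \<in> R p1. x < k2} \<noteq> {}" "k1 = pred_in (R p1) k2"
    unfolding a y cover_iff by blast
  then show ?case
  proof cases
    case 1
    then show ?thesis using succ_props(2)[of p2 k2] IH a by auto
  next
    case 2
    have P: "p1 \<in> P" "p2 \<in> P" using 2 G_iff by auto
    have "f p1 < f p2" using IncD2[OF step.prems(1) P] 2 unfolding covers_def by auto
    then show ?thesis using pred_props(3)[OF P(1) 2(4), of "f p1"] IncD1[OF step.prems(1) P(1)] IH 2 a by auto
  qed
qed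

lemma same_chain:
  "q \<in> P \<Longrightarrow> k \<in> R q \<Longrightarrow> k' \<in> R q \<Longrightarrow> k' \<noteq> Max (R q) \<Longrightarrow> k \<le> k' \<Longrightarrow>
    (Gamma_cover P le R)\<^sup>*\<^sup>* (q,k') (q,k)"
proof (induction "nat (k' - k)" arbitrary: k rule: less_induct)
  case less
  show ?case
  proof (cases "k = k'")
    case True then show ?thesis by simp
  next
    case False
    have k'lt: "k' < Max (R q)" using less.prems le_MaxR by fastforce
    have Gk: "(q,k) \<in> Gamma_set P R" using less.prems False k'lt G_iff by auto
    define s where "s = succ_in (R q) k"
    have s: "s \<in> R q" "k < s" "s \<le> k'" using succ_props[OF Gk] less.prems False unfolding s_def by auto
    have Gs: "(q,s) \<in> Gamma_set P R" using s k'lt G_iff less.prems by auto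
    have c: "Gamma_cover P le R (q,s) (q,k)" using Gk Gs s_def cover_iff by auto
    have "(Gamma_cover P le R)\<^sup>*\<^sup>* (q,k') (q,s)"
      using less.hyps[of s] s less.prems by auto
    then show ?thesis using c by (rule rtranclp.rtrancl_into_rtrancl)
  qed
qed


abbreviation "G \<equiv> Gamma_set P R"
abbreviation "L \<equiv> Inc P le R"
abbreviation "gle \<equiv> Gamma_le P le R"

lemma gfun_props:
  assumes "D \<subseteq> G" "q \<in> P"
  shows "gfun P R D q \<in> R q" "gfun P R D q \<le> Max (R q)"
    "gfun P R D q = Max (R q) \<or> (q, gfun P R D q) \<in> D"
    "\<And>k. (q,k) \<in> D \<Longrightarrow> gfun P R D q \<le> k"
proof -
  have fin: "finite (insert (Max (R q)) {k \<in> R q. (q,k) \<in> D})" using finR assms by auto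
  have mi: "gfun P R D q \<in> insert (Max (R q)) {k \<in> R q. (q,k) \<in> D}"
    unfolding gfun_def using Min_in[OF fin] assms by auto
  show "gfun P R D q \<in> R q" using mi MaxR assms by auto
  show "gfun P R D q \<le> Max (R q)" unfolding gfun_def using fin assms by auto
  show "gfun P R D q = Max (R q) \<or> (q, gfun P R D q) \<in> D" using mi by auto
  show "\<And>k. (q,k) \<in> D \<Longrightarrow> gfun P R D q \<le> k"
  proof -
    fix k assume "(q,k) \<in> D"
    then have "k \<in> R q" using assms G_iff by auto
    then show "gfun P R D q \<le> k" unfolding gfun_def using fin assms \<open>(q,k) \<in> D\<close> by auto
  qed
qed

lemma gle_refl: "a \<in> G \<Longrightarrow> gle a a" by (simp add: Gamma_le_def)
lemma gle_trans: "gle a b \<Longrightarrow> gle b c \<Longrightarrow> gle a c" 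
  unfolding Gamma_le_def by (meson rtranclp_trans)
lemma cover_G: "Gamma_cover P le R a b \<Longrightarrow> a \<in> G \<and> b \<in> G"
  unfolding Gamma_cover_def by blast
lemma gle_cover: "Gamma_cover P le R a b \<Longrightarrow> gle a b"
  unfolding Gamma_le_def using cover_G by blast

lemma idealD: "D \<in> order_ideals G gle \<Longrightarrow> D \<subseteq> G"
  "D \<in> order_ideals G gle \<Longrightarrow> a \<in> D \<Longrightarrow> b \<in> G \<Longrightarrow> gle b a \<Longrightarrow> b \<in> D"
  by (auto simp: order_ideals_def)

lemma DK: assumes "D \<in> order_ideals G gle" "(q,k) \<in> D" "k \<le> k'" "(q,k') \<in> G"
  shows "(q,k') \<in> D"
proof -
  have "(q,k) \<in> G" using assms idealD by auto
  then have q: "q \<in> P" "k \<in> R q" using G_iff by auto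
  have "k' \<in> R q" "k' \<noteq> Max (R q)" using assms(4) G_iff by auto
  then have "(Gamma_cover P le R)\<^sup>*\<^sup>* (q,k') (q,k)" using same_chain[OF q(1,2) _ _ assms(3)] by blast
  then have "gle (q,k') (q,k)" unfolding Gamma_le_def using assms(4) \<open>(q,k) \<in> G\<close> by blast
  then show ?thesis using assms idealD by blast
qed

lemma gD_val: assumes "D \<in> order_ideals G gle" "(q,k) \<in> G" "gfun P R D q \<le> k"
  shows "(q,k) \<in> D"
proof -
  have q: "q \<in> P" using assms G_iff by auto
  have "k < Max (R q)" using G_lt assms by auto
  then have "(q, gfun P R D q) \<in> D" using gfun_props(3)[OF idealD(1)[OF assms(1)] q] assms by auto
  moreover have "gfun P R D q \<le> k" using assms(3) .
  ultimately show ?thesis using DK[OF assms(1), of q "gfun P R D q" k] assms(2) by blast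
qed

lemma GI: assumes D: "D \<in> order_ideals G gle" shows "gfun P R D \<in> L"
proof (rule IncI)
  have DG: "D \<subseteq> G" using idealD D by auto
  show "\<And>q. q \<in> P \<Longrightarrow> gfun P R D q \<in> R q" using gfun_props DG by blast
  show "\<And>q. q \<notin> P \<Longrightarrow> gfun P R D q = undefined" by (simp add: gfun_def)
  fix p1 p2 assume cv: "covers P le p1 p2"
  have P: "p1 \<in> P" "p2 \<in> P" "le p1 p2" "p1 \<noteq> p2" using cv unfolding covers_def by auto
  define k2 where "k2 = gfun P R D p2"
  have k2R: "k2 \<in> R p2" using gfun_props(1)[OF DG P(2)] k2_def by simp
  show "gfun P R D p1 < gfun P R D p2"
  proof (cases "(p2, k2) \<in> D")
    case False
    then have "k2 = Max (R p2)" using gfun_props(3)[OF DG P(2)] k2_def by auto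
    then show ?thesis using gfun_props(2)[OF DG P(1)] Max_lt[OF P] k2_def by simp
  next
    case True
    have "Min (R p1) < Min (R p2)" using Min_lt[OF P] .
    moreover have "Min (R p2) \<le> k2" using ge_MinR[OF P(2) k2R] .
    ultimately have ne: "{x \<in> R p1. x < k2} \<noteq> {}" using MinR[OF P(1)] by force
    define j where "j = pred_in (R p1) k2"
    have j: "j \<in> R p1" "j < k2" using pred_props[OF P(1) ne] j_def by auto
    show ?thesis
    proof (cases "j = Max (R p1)")
      case True
      then show ?thesis using gfun_props(2)[OF DG P(1)] j k2_def by simp
    next
      case jn: False
      define Kst where "Kst = {k \<in> R p2. k2 \<le> k \<and> pred_in (R p1) k = j}"
      have finK: "finite Kst" using finR[OF P(2)] Kst_def by auto
      have k2K: "k2 \<in> Kst" using Kst_def k2R j_def by auto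
      define ks where "ks = Max Kst"
      have ksK: "ks \<in> Kst" using Max_in[OF finK] k2K ks_def by auto
      have ksmax: "\<And>k. k \<in> Kst \<Longrightarrow> k \<le> ks" using finK ks_def by auto
      have ksn: "ks \<noteq> Max (R p2)"
      proof
        assume eq: "ks = Max (R p2)"
        have pj: "pred_in (R p1) (Max (R p2)) = j" using ksK eq Kst_def by auto
        have "Max (R p1) < Max (R p2)" using Max_lt[OF P] .
        then have "Max (R p1) \<le> pred_in (R p1) (Max (R p2))"
          using pred_props(3)[OF P(1), of "Max (R p2)" "Max (R p1)"] MaxR[OF P(1)] by blast
        then show False using pj jn le_MaxR[OF P(1) j(1)] by simp
      qed
      have Gks: "(p2,ks) \<in> G" using ksK Kst_def ksn P G_iff by auto
      have Dks: "(p2,ks) \<in> D" using DK[OF D True _ Gks] ksK Kst_def by auto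
      have Gj: "(p1,j) \<in> G" using j jn P G_iff by auto
      have cov: "Gamma_cover P le R (p1,j) (p2,ks)"
        unfolding cover_iff
      proof (intro conjI disjI2 Gj Gks cv)
        show "{x \<in> R p1. x < ks} \<noteq> {}" using j ksK Kst_def by auto
        show "j = pred_in (R p1) ks" using ksK Kst_def by auto
        show "j \<noteq> Max (R p1)" using jn .
        show "\<not> (\<exists>k\<in>R p2. ks < k \<and> pred_in (R p1) k = j)"
        proof
          assume "\<exists>k\<in>R p2. ks < k \<and> pred_in (R p1) k = j"
          then obtain k where "k \<in> R p2" "ks < k" "pred_in (R p1) k = j" by blast
          then have "k \<in> Kst" using ksK Kst_def by auto
          then show False using ksmax \<open>ks < k\<close> by force
        qed
      qed
      have "(p1,j) \<in> D" using idealD(2)[OF D Dks Gj gle_cover[OF cov]] .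
      then have "gfun P R D p1 \<le> j" using gfun_props(4)[OF DG P(1)] by blast
      then show ?thesis using j k2_def by simp
    qed
  qed
qed

definition "phi b = gfun P R {a \<in> G. gle a b}"

lemma Db_ideal: "{a \<in> G. gle a b} \<in> order_ideals G gle"
  unfolding order_ideals_def using gle_trans by blast

lemma phi_Inc: "phi b \<in> L" unfolding phi_def using GI[OF Db_ideal] .

lemma CH: assumes b: "(p,k) \<in> G" and f: "f \<in> L"
  shows "inc_le P f (phi (p,k)) \<longleftrightarrow> f p \<le> k"
proof
  have p: "p \<in> P" using b G_iff by auto
  have DG: "{a \<in> G. gle a (p,k)} \<subseteq> G" by auto
  assume "inc_le P f (phi (p,k))"
  then have "f p \<le> phi (p,k) p" using p unfolding inc_le_def by auto
  also have "phi (p,k) p \<le> k" unfolding phi_def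
    using gfun_props(4)[OF DG p] gle_refl[OF b] b by auto
  finally show "f p \<le> k" .
next
  assume fk: "f p \<le> k"
  have DG: "{a \<in> G. gle a (p,k)} \<subseteq> G" by auto
  show "inc_le P f (phi (p,k))" unfolding inc_le_def
  proof
    fix q assume q: "q \<in> P"
    have fin: "finite (insert (Max (R q)) {k' \<in> R q. (q,k') \<in> {a \<in> G. gle a (p,k)}})"
      using finR q by auto
    have "f q \<le> Min (insert (Max (R q)) {k' \<in> R q. (q,k') \<in> {a \<in> G. gle a (p,k)}})"
    proof (rule Min.boundedI[OF fin])
      show "insert (Max (R q)) {k' \<in> R q. (q,k') \<in> {a \<in> G. gle a (p,k)}} \<noteq> {}" by blast
      fix x assume x: "x \<in> insert (Max (R q)) {k' \<in> R q. (q,k') \<in> {a \<in> G. gle a (p,k)}}"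
      show "f q \<le> x"
      proof (cases "x = Max (R q)")
        case True
        then show ?thesis using le_MaxR[OF q IncD1[OF f q]] by simp
      next
        case False
        then have "gle (q,x) (p,k)" using x by blast
        then have "(Gamma_cover P le R)\<^sup>*\<^sup>* (q,x) (p,k)" unfolding Gamma_le_def by blast
        from sound[OF this f] fk show "f q \<le> x" by simp
      qed
    qed
    then show "f q \<le> phi (p,k) q" unfolding phi_def gfun_def using q by simp
  qed
qed

lemma inc_le_refl: "inc_le P f f" by (simp add: inc_le_def)

lemma phi_self: "(p,k) \<in> G \<Longrightarrow> phi (p,k) p \<le> k"
  using CH[OF _ phi_Inc, of p k "(p,k)"] inc_le_refl by blast

lemma W_R: "p \<in> P \<Longrightarrow> k \<in> R p \<Longrightarrow> q \<in> P \<Longrightarrow> Wf P le R p k q \<in> R q"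
  unfolding Wf_def using MinR MaxR by auto

lemma W_Inc: assumes p: "p \<in> P" "k \<in> R p" shows "Wf P le R p k \<in> L"
proof (rule IncI)
  show "\<And>q. q \<in> P \<Longrightarrow> Wf P le R p k q \<in> R q" using W_R p by blast
  show "\<And>q. q \<notin> P \<Longrightarrow> Wf P le R p k q = undefined" by (simp add: Wf_def)
  fix x y assume cv: "covers P le x y"
  have P: "x \<in> P" "y \<in> P" "le x y" "x \<noteq> y" using cv unfolding covers_def by auto
  show "Wf P le R p k x < Wf P le R p k y"
  proof (cases "le y p \<and> y \<noteq> p")
    case True
    then have "le x p" "x \<noteq> p" using le_trans[OF P(1,2) p(1) P(3)] le_antisym[OF p(1) P(2)] P by auto
    then show ?thesis using True Min_lt[OF P] P unfolding Wf_def by auto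
  next
    case False
    show ?thesis
    proof (cases "y = p")
      case True
      then show ?thesis using Min_lt[OF P] P ge_MinR[OF p] unfolding Wf_def by auto
    next
      case False2: False
      have "Wf P le R p k x \<le> Max (R x)" using le_MaxR[OF P(1) W_R[OF p P(1)]] .
      also have "\<dots> < Max (R y)" using Max_lt[OF P] .
      finally show ?thesis using False False2 P unfolding Wf_def by auto
    qed
  qed
qed

lemma W_at: "p \<in> P \<Longrightarrow> Wf P le R p k p = k" using le_refl[of p] unfolding Wf_def by simp
lemma W_notle: "q \<in> P \<Longrightarrow> \<not> le q p \<Longrightarrow> Wf P le R p k q = Max (R q)"
  using le_refl[of q] unfolding Wf_def by auto

lemma phi_inj_aux:
  assumes a: "(p,k) \<in> G" and b: "(p',k') \<in> G" and eq: "phi (p,k) = phi (p',k')"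
  shows "le p' p \<and> (p' = p \<longrightarrow> k \<le> k')"
proof -
  have p: "p \<in> P" "k \<in> R p" "p' \<in> P" using a b G_iff by auto
  have WI: "Wf P le R p k \<in> L" using W_Inc[OF p(1,2)] .
  have "inc_le P (Wf P le R p k) (phi (p,k))" using CH[OF a WI] W_at[OF p(1)] by simp
  then have "inc_le P (Wf P le R p k) (phi (p',k'))" using eq by simp
  then have w: "Wf P le R p k p' \<le> k'" using CH[OF b WI] by simp
  have 1: "le p' p"
  proof (rule ccontr)
    assume "\<not> le p' p"
    then have "Wf P le R p k p' = Max (R p')" using W_notle[OF p(3)] by blast
    then show False using w G_lt[OF b] by simp
  qed
  have "p' = p \<longrightarrow> k \<le> k'" using w W_at[OF p(1)] by auto
  then show ?thesis using 1 by blast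
qed

lemma phi_inj: "inj_on phi G"
proof (rule inj_onI)
  fix a b assume a: "a \<in> G" and b: "b \<in> G" and eq: "phi a = phi b"
  obtain p k where a': "a = (p,k)" by (cases a)
  obtain p' k' where b': "b = (p',k')" by (cases b)
  have A: "(p,k) \<in> G" "(p',k') \<in> G" using a b a' b' by auto
  have E: "phi (p,k) = phi (p',k')" using eq a' b' by simp
  have 1: "le p' p \<and> (p' = p \<longrightarrow> k \<le> k')" using phi_inj_aux[OF A E] .
  have 2: "le p p' \<and> (p = p' \<longrightarrow> k' \<le> k)" using phi_inj_aux[OF A(2,1) E[symmetric]] .
  have pp: "p \<in> P" "p' \<in> P" using A G_iff by auto
  have "p = p'" using le_antisym[OF pp] 1 2 by blast
  then show "a = b" using 1 2 a' b' by auto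
qed

lemma minf_Inc: assumes "finite A" "A \<noteq> {}" "A \<subseteq> L" shows "minf P A \<in> L"
proof (rule IncI)
  have ex: "\<And>q. q \<in> P \<Longrightarrow> \<exists>a\<in>A. minf P A q = a q"
  proof -
    fix q assume q: "q \<in> P"
    have "Min ((\<lambda>a. a q) ` A) \<in> (\<lambda>a. a q) ` A" using assms by simp
    then obtain a where a: "a \<in> A" "Min ((\<lambda>a. a q) ` A) = a q" by blast
    have "minf P A q = a q" using q a(2) unfolding minf_def by simp
    then show "\<exists>a\<in>A. minf P A q = a q" using a(1) by blast
  qed
  show "minf P A q \<in> R q" if q: "q \<in> P" for q
  proof -
    obtain a where a: "a \<in> A" "minf P A q = a q" using ex[OF q] by blast
    have "a \<in> L" using a(1) assms(3) by blast
    then show ?thesis using a(2) IncD1 q by simp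
  qed
  show "\<And>q. q \<notin> P \<Longrightarrow> minf P A q = undefined" by (simp add: minf_def)
  fix x y assume cv: "covers P le x y"
  have P: "x \<in> P" "y \<in> P" "le x y" "x \<noteq> y" using cv unfolding covers_def by auto
  obtain a where a: "a \<in> A" "minf P A y = a y" using ex[OF P(2)] by blast
  have "minf P A x \<le> a x" using P(1) a(1) assms(1) unfolding minf_def by simp
  also have "a x < a y" using IncD2[OF _ P] a(1) assms(3) by blast
  finally show "minf P A x < minf P A y" using a by simp
qed

lemma minf_le: "finite A \<Longrightarrow> a \<in> A \<Longrightarrow> inc_le P (minf P A) a"
  unfolding inc_le_def minf_def by simp

lemma minf_ge: "finite A \<Longrightarrow> A \<noteq> {} \<Longrightarrow> (\<And>a. a \<in> A \<Longrightarrow> inc_le P w a) \<Longrightarrow> inc_le P w (minf P A)"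
  unfolding inc_le_def minf_def by simp

lemma minf_single: assumes f: "f \<in> L" shows "minf P {f} = f"
proof
  fix q show "minf P {f} q = f q"
  proof (cases "q \<in> P")
    case True then show ?thesis by (simp add: minf_def)
  next
    case False then show ?thesis using IncD3[OF f False] by (simp add: minf_def)
  qed
qed

lemma inc_le_trans: "inc_le P f g \<Longrightarrow> inc_le P g h \<Longrightarrow> inc_le P f h"
  unfolding inc_le_def by (meson order_trans)

lemma mi_in: assumes "finite A" "A \<noteq> {}" "A \<subseteq> L" "meet_irreducible L (inc_le P) (minf P A)"
  shows "minf P A \<in> A"
  using assms
proof (induction A rule: finite_ne_induct)
  case (singleton x)
  then show ?case using minf_single by simp
next
  case (insert x F)
  have FL: "F \<subseteq> L" "x \<in> L" using insert by auto
  have mF: "minf P F \<in> L" using minf_Inc[OF insert(1,2) FL(1)] .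
  have fin: "finite (insert x F)" using insert by simp
  have m: "minf P (insert x F) \<in> L" using minf_Inc[OF fin _ insert.prems(1)] by blast
  have "is_meet L (inc_le P) (minf P (insert x F)) x (minf P F)"
    unfolding is_meet_def
  proof (intro conjI ballI impI m)
    show "inc_le P (minf P (insert x F)) x" using minf_le[OF fin] by simp
    show "inc_le P (minf P (insert x F)) (minf P F)"
      using minf_ge[OF insert(1,2)] minf_le[OF fin] by blast
    fix w assume "w \<in> L" and h: "inc_le P w x \<and> inc_le P w (minf P F)"
    have "\<And>a. a \<in> insert x F \<Longrightarrow> inc_le P w a"
    proof -
      fix a assume a: "a \<in> insert x F"
      show "inc_le P w a"
      proof (cases "a = x")
        case True then show ?thesis using h by simp
      next
        case False then have "a \<in> F" using a by simp
        then have "inc_le P (minf P F) a" using minf_le insert by blast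
        then show ?thesis using h inc_le_trans by blast
      qed
    qed
    then show "inc_le P w (minf P (insert x F))" using minf_ge[OF fin] by blast
  qed
  then have "minf P (insert x F) = x \<or> minf P (insert x F) = minf P F"
    using insert.prems(2) FL(2) mF unfolding meet_irreducible_def by blast
  then show ?case
  proof
    assume "minf P (insert x F) = x" then show ?thesis by simp
  next
    assume e: "minf P (insert x F) = minf P F"
    then have "minf P F \<in> F" using insert.IH FL(1) insert.prems(2) by simp
    then show ?thesis using e by simp
  qed
qed

lemma phi_mi: assumes b: "(p,k) \<in> G" shows "meet_irreducible L (inc_le P) (phi (p,k))"
  unfolding meet_irreducible_def
proof (intro conjI phi_Inc ballI impI)
  have p: "p \<in> P" using b G_iff by auto
  have WI: "Wf P le R p (Max (R p)) \<in> L" using W_Inc p MaxR by auto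
  have "\<not> inc_le P (Wf P le R p (Max (R p))) (phi (p,k))"
    using CH[OF b WI] W_at[OF p] G_lt[OF b] by simp
  then show "\<exists>y\<in>L. \<not> inc_le P y (phi (p, k))" using WI by blast
  fix y z assume y: "y \<in> L" and z: "z \<in> L" and mt: "is_meet L (inc_le P) (phi (p, k)) y z"
  have fin: "finite {y,z}" by simp
  have wL: "minf P {y,z} \<in> L" using minf_Inc[OF fin] y z by blast
  have "inc_le P (minf P {y,z}) (phi (p,k))"
    using mt wL minf_le[OF fin] unfolding is_meet_def by blast
  then have "minf P {y,z} p \<le> k" using CH[OF b wL] by simp
  then have "min (y p) (z p) \<le> k" using p unfolding minf_def by simp
  then have "y p \<le> k \<or> z p \<le> k" by linarith
  then have "inc_le P y (phi (p,k)) \<or> inc_le P z (phi (p,k))" using CH[OF b y] CH[OF b z] by blast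
  moreover have "inc_le P (phi (p,k)) y" "inc_le P (phi (p,k)) z" using mt unfolding is_meet_def by auto
  ultimately show "phi (p, k) = y \<or> phi (p, k) = z" using inc_eq phi_Inc y z by blast
qed

lemma mi_phi: assumes m: "meet_irreducible L (inc_le P) m" shows "\<exists>b\<in>G. m = phi b"
proof -
  have mL: "m \<in> L" using m unfolding meet_irreducible_def by auto
  obtain y where y: "y \<in> L" "\<not> inc_le P y m" using m unfolding meet_irreducible_def by auto
  then obtain q0 where q0: "q0 \<in> P" "m q0 < y q0" unfolding inc_le_def by force
  define Q where "Q = {q \<in> P. m q \<noteq> Max (R q)}"
  have Gq: "\<And>q. q \<in> Q \<Longrightarrow> (q, m q) \<in> G" using Q_def IncD1[OF mL] G_iff by auto
  have "y q0 \<le> Max (R q0)" using le_MaxR[OF q0(1) IncD1[OF y(1) q0(1)]] .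
  then have "q0 \<in> Q" using q0 Q_def by auto
  define A where "A = (\<lambda>q. phi (q, m q)) ` Q"
  have finA: "finite A" using finP Q_def A_def by simp
  have neA: "A \<noteq> {}" using \<open>q0 \<in> Q\<close> A_def by auto
  have AL: "A \<subseteq> L" using A_def phi_Inc by auto
  have ge: "\<And>a. a \<in> A \<Longrightarrow> inc_le P m a"
  proof -
    fix a assume "a \<in> A"
    then obtain q where q: "q \<in> Q" "a = phi (q, m q)" using A_def by auto
    show "inc_le P m a" using CH[OF Gq[OF q(1)] mL] q by simp
  qed
  have "minf P A = m"
  proof (rule inc_eq[OF minf_Inc[OF finA neA AL] mL])
    show "inc_le P m (minf P A)" using minf_ge[OF finA neA] ge by blast
    show "inc_le P (minf P A) m" unfolding inc_le_def
    proof
      fix q assume q: "q \<in> P"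
      show "minf P A q \<le> m q"
      proof (cases "q \<in> Q")
        case True
        then have "phi (q, m q) \<in> A" using A_def by auto
        then have "minf P A q \<le> phi (q, m q) q" using minf_le[OF finA] q unfolding inc_le_def by blast
        also have "\<dots> \<le> m q" using phi_self Gq True by blast
        finally show ?thesis .
      next
        case False
        then have "m q = Max (R q)" using Q_def q by auto
        moreover have "minf P A q \<in> R q" using IncD1[OF minf_Inc[OF finA neA AL] q] .
        ultimately show ?thesis using le_MaxR q by simp
      qed
    qed
  qed
  then have "m \<in> A" using mi_in[OF finA neA AL] m by simp
  then show ?thesis using A_def Gq by auto
qed

lemma part1: "bij_betw phi G {f. meet_irreducible L (inc_le P) f} \<and>
            (\<forall>a\<in>G. \<forall>b\<in>G. gle a b \<longleftrightarrow> inc_le P (phi b) (phi a))"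
proof
  show "bij_betw phi G {f. meet_irreducible L (inc_le P) f}"
    unfolding bij_betw_def
  proof
    show "inj_on phi G" by (rule phi_inj)
    show "phi ` G = {f. meet_irreducible L (inc_le P) f}"
    proof
      show "phi ` G \<subseteq> {f. meet_irreducible L (inc_le P) f}" using phi_mi by auto
      show "{f. meet_irreducible L (inc_le P) f} \<subseteq> phi ` G" using mi_phi by blast
    qed
  qed
  show "\<forall>a\<in>G. \<forall>b\<in>G. gle a b \<longleftrightarrow> inc_le P (phi b) (phi a)"
  proof (intro ballI)
    fix a b assume a: "a \<in> G" and b: "b \<in> G"
    obtain p1 k1 where a': "a = (p1,k1)" by (cases a)
    obtain p2 k2 where b': "b = (p2,k2)" by (cases b)
    show "gle a b \<longleftrightarrow> inc_le P (phi b) (phi a)"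
    proof
      assume "gle a b"
      then have r: "(Gamma_cover P le R)\<^sup>*\<^sup>* a b" unfolding Gamma_le_def by blast
      have "phi b p2 \<le> k2" using phi_self b b' by blast
      then have "phi b p1 \<le> k1" using sound[OF r phi_Inc] a' b' by simp
      then show "inc_le P (phi b) (phi a)" using CH[OF a[unfolded a'] phi_Inc] a' by simp
    next
      assume h: "inc_le P (phi b) (phi a)"
      have p1: "p1 \<in> P" using a a' G_iff by auto
      have "phi b p1 \<le> phi a p1" using h p1 unfolding inc_le_def by blast
      also have "\<dots> \<le> k1" using phi_self a a' by blast
      finally have "gfun P R {c \<in> G. gle c b} p1 \<le> k1" unfolding phi_def .
      then have "(p1,k1) \<in> {c \<in> G. gle c b}" using gD_val[OF Db_ideal] a a' by blast
      then show "gle a b" using a' by simp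
    qed
  qed
qed

lemma part2: "bij_betw (gfun P R) (order_ideals G gle) L"
  unfolding bij_betw_def
proof
  show "inj_on (gfun P R) (order_ideals G gle)"
  proof (rule inj_onI)
    have sub: "\<And>D D'. D \<in> order_ideals G gle \<Longrightarrow> D' \<in> order_ideals G gle \<Longrightarrow>
       gfun P R D = gfun P R D' \<Longrightarrow> D \<subseteq> D'"
    proof
      fix D D' c assume D: "D \<in> order_ideals G gle" and D': "D' \<in> order_ideals G gle"
        and eq: "gfun P R D = gfun P R D'" and c: "c \<in> D"
      obtain q k where c': "c = (q,k)" by (cases c)
      have cG: "(q,k) \<in> G" using c c' idealD(1)[OF D] by auto
      have q: "q \<in> P" using cG G_iff by auto
      have "gfun P R D q \<le> k" using gfun_props(4)[OF idealD(1)[OF D] q] c c' by simp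
      then have "gfun P R D' q \<le> k" using eq by simp
      then show "c \<in> D'" using gD_val[OF D' cG] c' by simp
    qed
    fix D D' assume "D \<in> order_ideals G gle" "D' \<in> order_ideals G gle" "gfun P R D = gfun P R D'"
    then show "D = D'" using sub[of D D'] sub[of D' D] by auto
  qed
  show "gfun P R ` order_ideals G gle = L"
  proof
    show "gfun P R ` order_ideals G gle \<subseteq> L" using GI by auto
    show "L \<subseteq> gfun P R ` order_ideals G gle"
    proof
      fix f assume f: "f \<in> L"
      define D where "D = {c \<in> G. f (fst c) \<le> snd c}"
      have D: "D \<in> order_ideals G gle" unfolding order_ideals_def
      proof (intro CollectI conjI ballI impI)
        show "D \<subseteq> G" using D_def by auto
        fix a b assume a: "a \<in> D" and b: "b \<in> G" and "gle b a"
        then have r: "(Gamma_cover P le R)\<^sup>*\<^sup>* b a" unfolding Gamma_le_def by blast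
        have "f (fst b) \<le> snd b" using sound[OF r f] a D_def by simp
        then show "b \<in> D" using D_def b by simp
      qed
      have "gfun P R D = f"
      proof
        fix q show "gfun P R D q = f q"
        proof (cases "q \<in> P")
          case False then show ?thesis using IncD3[OF f False] by (simp add: gfun_def)
        next
          case q: True
          have fin: "finite (insert (Max (R q)) {k \<in> R q. (q,k) \<in> D})" using finR q by simp
          have fq: "f q \<in> R q" using IncD1[OF f q] .
          have "Min (insert (Max (R q)) {k \<in> R q. (q,k) \<in> D}) = f q"
          proof (rule Min_eqI[OF fin])
            fix y assume "y \<in> insert (Max (R q)) {k \<in> R q. (q,k) \<in> D}"
            then show "f q \<le> y" using le_MaxR[OF q fq] D_def by auto
          next
            show "f q \<in> insert (Max (R q)) {k \<in> R q. (q,k) \<in> D}"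
              using fq q D_def G_iff by auto
          qed
          then show ?thesis using q by (simp add: gfun_def)
        qed
      qed
      then show "f \<in> gfun P R ` order_ideals G gle" using D by blast
    qed
  qed
qed

end

theorem theorem2p14:
  fixes P :: "'a set" and le :: "'a \<Rightarrow> 'a \<Rightarrow> bool" and R :: "'a \<Rightarrow> int set"
  assumes "finite P" and "poset_on P le" and "restriction_fun P R" and "consistent P le R"
  shows "(\<exists>\<phi>. bij_betw \<phi> (Gamma_set P R) {f. meet_irreducible (Inc P le R) (inc_le P) f} \<and>
            (\<forall>a\<in>Gamma_set P R. \<forall>b\<in>Gamma_set P R.
               Gamma_le P le R a b \<longleftrightarrow> inc_le P (\<phi> b) (\<phi> a)))
       \<and> (\<exists>g. bij_betw g (order_ideals (Gamma_set P R) (Gamma_le P le R)) (Inc P le R))"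
proof -
  interpret gsetting P le R using assms by (unfold_locales)
  show ?thesis using part1 part2 by blast
qed

end
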